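(* Let $n\ge1$ and let $f$ be an automorphism of the additive group $\mathbb{Z}^n$. If $f$ has cycles of lengths $\alpha$ and $\beta$, each different from the zero cycle $\{0\}$, then $f$ has a cycle of length $\mathrm{lcm}(\alpha,\beta)$.
   Context: For a bijection $f$ of a set, a cycle is a finite sequence $a_1,\dots,a_m$ of distinct elements with $f(a_j)=a_{j+1}$ for $j<m$ and $f(a_m)=a_1$; its length is $m$. The zero cycle of an automorphism of $\mathbb{Z}^n$ is the fixed point $0$. *)

theory Defs
  imports "HOL-Analysis.Finite_Cartesian_Product"
begin

definition is_cycle :: "('a \<Rightarrow> 'a) \<Rightarrow> 'a list \<Rightarrow> bool" where
  "is_cycle f xs \<longleftrightarrow> xs \<noteq> [] \<and> distinct xs \<and>
     (\<forall>j < length xs. f (xs ! j) = xs ! (Suc j mod length xs))"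

end

theory Submission
  imports Defs
begin

lemma of_int_index: "(of_int c :: int ^'n) $ i = c"
proof (cases c rule: int_cases)
  case (nonneg n) then show ?thesis by (simp add: of_nat_index)
next
  case (neg n) then show ?thesis by (simp add: of_nat_index)
qed

lemma cyc_pow:
  assumes "is_cycle f xs"
  shows "(f^^k) (xs!0) = xs ! (k mod length xs)"
proof (induction k)
  case 0 then show ?case by simp
next
  case (Suc k)
  have "k mod length xs < length xs" using assms unfolding is_cycle_def by simp
  then have "f (xs ! (k mod length xs)) = xs ! (Suc (k mod length xs) mod length xs)"
    using assms unfolding is_cycle_def by blast
  then show ?case using Suc by (simp add: mod_Suc_eq)
qed

lemma cyc_period:
  assumes "is_cycle f xs"
  shows "(f^^k) (xs!0) = xs!0 \<longleftrightarrow> length xs dvd k"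
proof -
  have d: "distinct xs" and p: "length xs > 0" using assms unfolding is_cycle_def by auto
  have "xs ! (k mod length xs) = xs ! 0 \<longleftrightarrow> k mod length xs = 0"
    using nth_eq_iff_index_eq[OF d] p by simp
  then show ?thesis using cyc_pow[OF assms] by (simp add: dvd_eq_mod_eq_0)
qed

lemma add_zero: fixes g :: "int^'n \<Rightarrow> int^'n"
  assumes "\<And>x y. g (x + y) = g x + g y" shows "g 0 = 0"
  using assms[of 0 0] by simp

lemma add_neg: fixes g :: "int^'n \<Rightarrow> int^'n"
  assumes "\<And>x y. g (x + y) = g x + g y" shows "g (- v) = - g v"
  using assms[of v "-v"] add_zero[OF assms] by (simp add: eq_neg_iff_add_eq_0 add.commute)

lemma add_diff: fixes g :: "int^'n \<Rightarrow> int^'n"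
  assumes "\<And>x y. g (x + y) = g x + g y" shows "g (a - b) = g a - g b"
  using assms[of a "-b"] add_neg[OF assms] by simp

lemma add_nat: fixes g :: "int^'n \<Rightarrow> int^'n"
  assumes "\<And>x y. g (x + y) = g x + g y" shows "g (of_nat n * v) = of_nat n * g v"
proof (induction n)
  case 0 then show ?case using add_zero[OF assms] by simp
next
  case (Suc n) then show ?case using assms by (simp add: distrib_right)
qed

lemma add_int: fixes g :: "int^'n \<Rightarrow> int^'n"
  assumes "\<And>x y. g (x + y) = g x + g y" shows "g (of_int c * v) = of_int c * g v"
proof (cases c rule: int_cases)
  case (nonneg n) then show ?thesis using add_nat[OF assms] by simp
next
  case (neg n)
  have oc: "(of_int c :: int^'n) = - of_nat (Suc n)" using neg by (simp only: of_int_minus of_int_of_nat_eq)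
  then have "g (of_int c * v) = g (- (of_nat (Suc n) * v))" by (metis minus_mult_left)
  also have "\<dots> = - (of_nat (Suc n) * g v)" by (metis add_neg[OF assms] add_nat[OF assms])
  finally show ?thesis using oc by (metis minus_mult_left)
qed

lemma pow_add: fixes f :: "int^'n \<Rightarrow> int^'n"
  assumes "\<And>x y. f (x + y) = f x + f y" shows "(f^^k) (x + y) = (f^^k) x + (f^^k) y"
  by (induction k) (simp_all add: assms)

lemma torsion_free: fixes v :: "int^'n"
  assumes "v \<noteq> 0" "of_int c * v = of_int d * v" shows "c = d"
proof -
  obtain i where i: "v $ i \<noteq> 0" using assms(1) by (auto simp: vec_eq_iff)
  have "(of_int c * v) $ i = (of_int d * v) $ i" using assms(2) by simp
  then have "c * v $ i = d * v $ i" by (simp add: of_int_index)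
  then show ?thesis using i by simp
qed

theorem theorem3p8:
  fixes f :: "int ^ 'n \<Rightarrow> int ^ 'n" and xs ys :: "(int ^ 'n) list"
  assumes "bij f"
    and "\<And>x y. f (x + y) = f x + f y"
    and "is_cycle f xs" and "xs \<noteq> [0]"
    and "is_cycle f ys" and "ys \<noteq> [0]"
  shows "\<exists>zs. is_cycle f zs \<and> length zs = lcm (length xs) (length ys)"
proof -
  define L where "L = lcm (length xs) (length ys)"
  define x where "x = xs!0"
  define y where "y = ys!0"
  have ga: "\<And>k a b. (f^^k) (a + b) = (f^^k) a + (f^^k) b" using pow_add[OF assms(2)] .
  have gs: "\<And>k a b. (f^^k) (a - b) = (f^^k) a - (f^^k) b" using add_diff[OF ga] .
  have gi: "\<And>k c v. (f^^k) (of_int c * v) = of_int c * (f^^k) v" using add_int[OF ga] .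
  have Lpos: "L > 0" using assms(3,5) unfolding is_cycle_def L_def by (simp add: lcm_pos_nat)
  define B where "B k = {c::int. (f^^k) (x + of_int c * y) = x + of_int c * y}" for k
  have sub: "c = d" if k: "0 < k" "k < L" and c: "c \<in> B k" and d: "d \<in> B k" for k c d
  proof -
    define w where "w = (f^^k) y - y"
    have e: "(f^^k) x - x + of_int e * w = 0" if "e \<in> B k" for e
    proof -
      have h: "(f^^k) x + of_int e * (f^^k) y = x + of_int e * y"
        using that unfolding B_def by (simp only: mem_Collect_eq ga gi)
      have "(f^^k) x - x + of_int e * w = ((f^^k) x + of_int e * (f^^k) y) - (x + of_int e * y)"
        unfolding w_def by (simp add: algebra_simps)
      then show ?thesis using h by simp
    qed
    have "w \<noteq> 0"
    proof
      assume w0: "w = 0"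
      then have "(f^^k) x = x" using e[OF c] by simp
      moreover have "(f^^k) y = y" using w0 w_def by simp
      ultimately have "length xs dvd k" "length ys dvd k"
        using cyc_period[OF assms(3)] cyc_period[OF assms(5)] x_def y_def by auto
      then have "L dvd k" unfolding L_def by simp
      then show False using k by (simp add: nat_dvd_not_less)
    qed
    moreover have "of_int c * w = of_int d * w" using e[OF c] e[OF d]
      by (metis add_left_cancel)
    ultimately show ?thesis using torsion_free by blast
  qed
  have finB: "finite (B k)" if "0 < k" "k < L" for k
  proof (cases "B k = {}")
    case False
    then obtain c where "c \<in> B k" by blast
    then have "B k \<subseteq> {c}" using sub[OF that] by blast
    then show ?thesis using finite_subset by blast
  qed simp
  have "finite (\<Union>k\<in>{0<..<L}. B k)" using finB by auto
  then obtain c where c: "c \<notin> (\<Union>k\<in>{0<..<L}. B k)"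
    using ex_new_if_finite[OF infinite_UNIV_int] by blast
  define z where "z = x + of_int c * y"
  have nz: "(f^^k) z \<noteq> z" if "0 < k" "k < L" for k
    using c that unfolding B_def z_def by auto
  have xL: "(f^^L) x = x" using cyc_period[OF assms(3)] x_def L_def by simp
  have yL: "(f^^L) y = y" using cyc_period[OF assms(5)] y_def L_def by simp
  have zL: "(f^^L) z = z" unfolding z_def by (simp add: ga gi xL yL)
  define zs where "zs = map (\<lambda>i. (f^^i) z) [0..<L]"
  have "inj_on (\<lambda>i. (f^^i) z) {0..<L}"
  proof (rule inj_onI)
    fix i j assume i: "i \<in> {0..<L}" and j: "j \<in> {0..<L}" and e: "(f^^i) z = (f^^j) z"
    show "i = j"
    proof (rule ccontr)
      assume "i \<noteq> j"
      then consider "i < j" | "j < i" by linarith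
      then show False
      proof cases
        case 1
        have "(f^^i) ((f^^(j-i)) z) = (f^^i) z" using e 1
          by (metis funpow_add le_add_diff_inverse less_imp_le o_apply)
        then have "(f^^(j-i)) z = z" using inj_fn[OF bij_is_inj[OF assms(1)]]
          by (meson injD)
        moreover have "j - i < L" using j by auto
        ultimately show False using nz[of "j-i"] 1 by auto
      next
        case 2
        have "(f^^j) ((f^^(i-j)) z) = (f^^j) z" using e 2
          by (metis funpow_add le_add_diff_inverse less_imp_le o_apply)
        then have "(f^^(i-j)) z = z" using inj_fn[OF bij_is_inj[OF assms(1)]]
          by (meson injD)
        moreover have "i - j < L" using i by auto
        ultimately show False using nz[of "i-j"] 2 by auto
      qed
    qed
  qed
  then have dz: "distinct zs" unfolding zs_def by (simp add: distinct_map)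
  have "is_cycle f zs" unfolding is_cycle_def
  proof (intro conjI allI impI)
    show "zs \<noteq> []" using Lpos zs_def by simp
    show "distinct zs" by (rule dz)
    fix j assume j: "j < length zs"
    then have jL: "j < L" by (simp add: zs_def)
    show "f (zs ! j) = zs ! (Suc j mod length zs)"
    proof (cases "Suc j < L")
      case True then show ?thesis using jL by (simp add: zs_def)
    next
      case False
      then have "Suc j = L" using jL by simp
      moreover have "f ((f^^j) z) = (f^^(Suc j)) z" by simp
      ultimately show ?thesis using jL zL Lpos by (simp add: zs_def)
    qed
  qed
  moreover have "length zs = L" by (simp add: zs_def)
  ultimately show ?thesis unfolding L_def by blast
qed

end
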